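(* Let $\varepsilon_1,\varepsilon_2>0$ and $\varepsilon=\varepsilon_1+\varepsilon_2$. For a dataset $D=\{(x_i,y_i)\}_{i=1}^n$ with $x_i,y_i\in[0,1]$, let $S_{x^2}=\sum_i x_i^2$, $S_{x-x^2}=\sum_i (x_i-x_i^2)$, $S_{1-x}=\sum_i(1-x_i)$, $S_{xy}=\sum_i x_iy_i$, $S_{(1-x)y}=\sum_i (1-x_i)y_i$, $S_{1-y}=\sum_i(1-y_i)$. Let $Z_{11},Z_{12},Z_{13}$ be i.i.d. $\mathrm{Lap}(1/\varepsilon_1)$, let $Z_{21},Z_{22},Z_{23}$ be i.i.d. $\mathrm{Lap}(1/\varepsilon_2)$, with the two groups independent of each other. Then the mechanism releasing $\mathcal{M}(D)=\bigl(S_{x^2}+Z_{11},\,S_{x-x^2}+Z_{12},\,S_{1-x}+Z_{13},\,S_{xy}+Z_{21},\,S_{(1-x)y}+Z_{22},\,S_{1-y}+Z_{23}\bigr)$ satisfies $\varepsilon$-differential privacy.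
   Context: $\mathrm{Lap}(b)$ denotes the zero-mean Laplace distribution with density $\frac{1}{2b}e^{-|z|/b}$. Two datasets are neighboring ($D\sim D'$) if one is obtained from the other by adding or removing a single record in $[0,1]^2$. A randomized mechanism $\mathcal{M}$ satisfies $\varepsilon$-differential privacy (pure DP) if for all neighboring $D\sim D'$ and all measurable sets $S$ of outputs, $\Pr[\mathcal{M}(D)\in S]\le e^{\varepsilon}\Pr[\mathcal{M}(D')\in S]$. *)

theory Defs
  imports "HOL-Probability.Probability"
begin

type_synonym datum = "real \<times> real"
type_synonym dataset = "datum list"
type_synonym output6 = "real \<times> real \<times> real \<times> real \<times> real \<times> real"

definition laplace_density :: "real \<Rightarrow> real \<Rightarrow> real" where
  "laplace_density b z = exp (- \<bar>z\<bar> / b) / (2 * b)"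

definition laplace :: "real \<Rightarrow> real measure" where
  "laplace b = density lborel (\<lambda>z. ennreal (laplace_density b z))"

definition valid_record :: "datum \<Rightarrow> bool" where
  "valid_record r \<longleftrightarrow> fst r \<in> {0..1} \<and> snd r \<in> {0..1}"

definition valid_dataset :: "dataset \<Rightarrow> bool" where
  "valid_dataset D \<longleftrightarrow> (\<forall>r\<in>set D. valid_record r)"

definition neighbors :: "dataset \<Rightarrow> dataset \<Rightarrow> bool" where
  "neighbors D D' \<longleftrightarrow>
     (\<exists>xs ys r. D' = xs @ r # ys \<and> D = xs @ ys) \<or>
     (\<exists>xs ys r. D = xs @ r # ys \<and> D' = xs @ ys)"

definition S_x2 :: "dataset \<Rightarrow> real" where
  "S_x2 D = (\<Sum>(x,y)\<leftarrow>D. x\<^sup>2)"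
definition S_x_x2 :: "dataset \<Rightarrow> real" where
  "S_x_x2 D = (\<Sum>(x,y)\<leftarrow>D. x - x\<^sup>2)"
definition S_1_x :: "dataset \<Rightarrow> real" where
  "S_1_x D = (\<Sum>(x,y)\<leftarrow>D. 1 - x)"
definition S_xy :: "dataset \<Rightarrow> real" where
  "S_xy D = (\<Sum>(x,y)\<leftarrow>D. x * y)"
definition S_1_x_y :: "dataset \<Rightarrow> real" where
  "S_1_x_y D = (\<Sum>(x,y)\<leftarrow>D. (1 - x) * y)"
definition S_1_y :: "dataset \<Rightarrow> real" where
  "S_1_y D = (\<Sum>(x,y)\<leftarrow>D. 1 - y)"

definition noise :: "real \<Rightarrow> real \<Rightarrow> output6 measure" where
  "noise e1 e2 = laplace (1/e1) \<Otimes>\<^sub>M laplace (1/e1) \<Otimes>\<^sub>M laplace (1/e1) \<Otimes>\<^sub>M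
                 laplace (1/e2) \<Otimes>\<^sub>M laplace (1/e2) \<Otimes>\<^sub>M laplace (1/e2)"

definition mech :: "real \<Rightarrow> real \<Rightarrow> dataset \<Rightarrow> output6 measure" where
  "mech e1 e2 D = distr (noise e1 e2) borel
     (\<lambda>(z11, z12, z13, z21, z22, z23).
        (S_x2 D + z11, S_x_x2 D + z12, S_1_x D + z13,
         S_xy D + z21, S_1_x_y D + z22, S_1_y D + z23))"

definition pure_dp :: "real \<Rightarrow> (dataset \<Rightarrow> output6 measure) \<Rightarrow> bool" where
  "pure_dp \<epsilon> M \<longleftrightarrow>
     (\<forall>D D'. valid_dataset D \<and> valid_dataset D' \<and> neighbors D D' \<longrightarrow>
        (\<forall>S \<in> sets (borel :: output6 measure).
           measure (M D) S \<le> exp \<epsilon> * measure (M D') S))"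

end

theory Submission
  imports Defs
begin

definition Plap :: "real \<Rightarrow> real \<Rightarrow> real measure" where
  "Plap b a = density lborel (\<lambda>z. ennreal (laplace_density b (z - a)))"

lemma lap_meas[measurable]:
  "(\<lambda>z. ennreal (laplace_density b (z - a))) \<in> borel_measurable borel"
  unfolding laplace_density_def by measurable

lemma lap_meas2[measurable]:
  "(\<lambda>z. ennreal (laplace_density b z)) \<in> borel_measurable borel"
  unfolding laplace_density_def by measurable

lemma laplace_finite:
  assumes b: "b > 0"
  shows "finite_measure (laplace b)"
proof -
  let ?ed = "exponential_density (1/b)"
  have edm[measurable]: "(\<lambda>z. ennreal (?ed z)) \<in> borel_measurable borel"
    by measurable
  have ed1: "(\<integral>\<^sup>+z. ennreal (?ed z) \<partial>lborel) = 1"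
  proof -
    interpret prob_space "density lborel (\<lambda>z. ennreal (?ed z))"
      using prob_space_exponential_density b by simp
    have "emeasure (density lborel (\<lambda>z. ennreal (?ed z))) UNIV = 1"
      using emeasure_space_1 by simp
    then show ?thesis by (subst (asm) emeasure_density) auto
  qed
  have ed2: "(\<integral>\<^sup>+z. ennreal (?ed (-z)) \<partial>lborel) = 1"
    using nn_integral_real_affine[of "\<lambda>z. ennreal (?ed z)" "-1" 0] ed1 by simp
  have "(\<integral>\<^sup>+z. ennreal (laplace_density b z) \<partial>lborel)
      \<le> (\<integral>\<^sup>+z. ennreal (?ed z) + ennreal (?ed (-z)) \<partial>lborel)"
  proof (rule nn_integral_mono)
    fix z :: real
    have "laplace_density b z \<le> ?ed z + ?ed (-z)"
    proof (cases "z < 0")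
      case True
      then show ?thesis using b
        by (auto simp: laplace_density_def exponential_density_def divide_simps)
    next
      case False
      then show ?thesis using b
        by (auto simp: laplace_density_def exponential_density_def divide_simps)
    qed
    moreover have "0 \<le> ?ed z" "0 \<le> ?ed (-z)" using b exponential_density_nonneg by auto
    ultimately show "ennreal (laplace_density b z) \<le> ennreal (?ed z) + ennreal (?ed (-z))"
      by (simp add: ennreal_plus[symmetric] del: ennreal_plus)
  qed
  also have "\<dots> = 2" by (subst nn_integral_add) (auto simp: ed1 ed2)
  finally have "(\<integral>\<^sup>+z. ennreal (laplace_density b z) \<partial>lborel) \<le> 2" .
  then show ?thesis unfolding laplace_def
    by (intro finite_measureI) (auto simp: emeasure_density top_unique)
qed


lemma Plap_distr:
  "Plap b a = distr (laplace b) borel (\<lambda>z. a + z)"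
proof -
  have "density (distr lborel borel ((+) a)) (\<lambda>u. ennreal (laplace_density b (u - a)))
      = distr (density lborel (\<lambda>x. ennreal (laplace_density b (a + x - a)))) borel ((+) a)"
    by (rule density_distr) auto
  then show ?thesis unfolding Plap_def laplace_def by (simp add: lborel_distr_plus)
qed

lemma Plap_finite: "b > 0 \<Longrightarrow> finite_measure (Plap b a)"
  unfolding Plap_distr
  by (rule finite_measure.finite_measure_distr[OF laplace_finite]) (auto simp: laplace_def)

definition dens_dom :: "'a measure \<Rightarrow> ennreal \<Rightarrow> 'a measure \<Rightarrow> 'a measure \<Rightarrow> bool" where
  "dens_dom B c M N \<longleftrightarrow> sigma_finite_measure B \<and> finite_measure M \<and> finite_measure N \<and>
     (\<exists>f g. f \<in> borel_measurable B \<and> g \<in> borel_measurable B \<and> M = density B f \<and>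
        N = density B g \<and> (\<forall>x\<in>space B. f x \<le> c * g x))"

lemma dens_dom_pair:
  assumes "dens_dom B1 c1 M1 N1" "dens_dom B2 c2 M2 N2"
  shows "dens_dom (B1 \<Otimes>\<^sub>M B2) (c1 * c2) (M1 \<Otimes>\<^sub>M M2) (N1 \<Otimes>\<^sub>M N2)"
proof -
  from assms(1) obtain f1 g1 where A1: "sigma_finite_measure B1" "finite_measure M1" "finite_measure N1"
    and f1[measurable]: "f1 \<in> borel_measurable B1" and g1[measurable]: "g1 \<in> borel_measurable B1"
    and e1: "M1 = density B1 f1" "N1 = density B1 g1" and le1: "\<forall>x\<in>space B1. f1 x \<le> c1 * g1 x"
    unfolding dens_dom_def by blast
  from assms(2) obtain f2 g2 where A2: "sigma_finite_measure B2" "finite_measure M2" "finite_measure N2"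
    and f2[measurable]: "f2 \<in> borel_measurable B2" and g2[measurable]: "g2 \<in> borel_measurable B2"
    and e2: "M2 = density B2 f2" "N2 = density B2 g2" and le2: "\<forall>x\<in>space B2. f2 x \<le> c2 * g2 x"
    unfolding dens_dom_def by blast
  have "M1 \<Otimes>\<^sub>M M2 = density (B1 \<Otimes>\<^sub>M B2) (\<lambda>(x,y). f1 x * f2 y)"
    unfolding e1 e2 using A2 e2
    by (intro pair_measure_density) (auto intro: finite_measure.sigma_finite_measure)
  moreover have "N1 \<Otimes>\<^sub>M N2 = density (B1 \<Otimes>\<^sub>M B2) (\<lambda>(x,y). g1 x * g2 y)"
    unfolding e1 e2 using A2 e2
    by (intro pair_measure_density) (auto intro: finite_measure.sigma_finite_measure)
  moreover have "\<forall>z\<in>space (B1 \<Otimes>\<^sub>M B2). (\<lambda>(x,y). f1 x * f2 y) z \<le> (c1 * c2) * (\<lambda>(x,y). g1 x * g2 y) z"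
  proof
    fix z assume "z \<in> space (B1 \<Otimes>\<^sub>M B2)"
    then obtain x y where z: "z = (x,y)" "x \<in> space B1" "y \<in> space B2"
      by (auto simp: space_pair_measure)
    have "f1 x * f2 y \<le> (c1 * g1 x) * (c2 * g2 y)"
      using le1 le2 z by (intro mult_mono) auto
    then show "(\<lambda>(x,y). f1 x * f2 y) z \<le> (c1 * c2) * (\<lambda>(x,y). g1 x * g2 y) z"
      using z by (simp add: ac_simps)
  qed
  moreover have "sigma_finite_measure (B1 \<Otimes>\<^sub>M B2)"
    using A1 A2 by (intro sigma_finite_pair_measure) auto
  moreover have "finite_measure (M1 \<Otimes>\<^sub>M M2)" "finite_measure (N1 \<Otimes>\<^sub>M N2)"
    using A1 A2 by (auto intro: finite_measure_pair_measure)
  ultimately show ?thesis unfolding dens_dom_def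
    by (intro conjI exI[of _ "\<lambda>(x,y). f1 x * f2 y"] exI[of _ "\<lambda>(x,y). g1 x * g2 y"]) auto
qed

lemma dens_dom_mono: "dens_dom B c M N \<Longrightarrow> c \<le> c' \<Longrightarrow> dens_dom B c' M N"
proof -
  assume a: "dens_dom B c M N" "c \<le> c'"
  then obtain f g where *: "sigma_finite_measure B" "finite_measure M" "finite_measure N"
    "f \<in> borel_measurable B" "g \<in> borel_measurable B" "M = density B f"
    "N = density B g" "\<forall>x\<in>space B. f x \<le> c * g x"
    unfolding dens_dom_def by blast
  have "\<forall>x\<in>space B. f x \<le> c' * g x"
    using *(8) a(2) by (meson mult_right_mono order_trans zero_le)
  then show ?thesis using * unfolding dens_dom_def by blast
qed

lemma dens_dom_le:
  assumes "dens_dom B c M N" "A \<in> sets M"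
  shows "emeasure M A \<le> c * emeasure N A"
proof -
  from assms(1) obtain f g where f[measurable]: "f \<in> borel_measurable B" and g[measurable]: "g \<in> borel_measurable B"
    and e: "M = density B f" "N = density B g" and le: "\<forall>x\<in>space B. f x \<le> c * g x"
    unfolding dens_dom_def by blast
  have A[measurable]: "A \<in> sets B" using assms(2) e by simp
  have "emeasure M A = (\<integral>\<^sup>+x. f x * indicator A x \<partial>B)" unfolding e by (rule emeasure_density) auto
  also have "\<dots> \<le> (\<integral>\<^sup>+x. c * (g x * indicator A x) \<partial>B)"
    using le by (intro nn_integral_mono) (auto simp: indicator_def)
  also have "\<dots> = c * emeasure N A"
    unfolding e by (subst nn_integral_cmult) (auto simp: emeasure_density)
  finally show ?thesis .
qed

lemma dens_dom_base:
  assumes e: "e > 0"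
  shows "dens_dom lborel (ennreal (exp (e * \<bar>a - a'\<bar>))) (Plap (1/e) a) (Plap (1/e) a')"
proof -
  have "\<forall>z. ennreal (laplace_density (1/e) (z - a)) \<le> ennreal (exp (e * \<bar>a - a'\<bar>)) * ennreal (laplace_density (1/e) (z - a'))"
  proof
    fix z :: real
    have "\<bar>z - a'\<bar> \<le> \<bar>z - a\<bar> + \<bar>a - a'\<bar>" by simp
    then have "- \<bar>z - a\<bar> * e \<le> e * \<bar>a - a'\<bar> + - \<bar>z - a'\<bar> * e" using e
      by (simp add: algebra_simps) (metis mult.commute distrib_left mult_left_mono less_imp_le)
    then have "exp (- \<bar>z - a\<bar> * e) \<le> exp (e * \<bar>a - a'\<bar>) * exp (- \<bar>z - a'\<bar> * e)"
      by (simp add: exp_add[symmetric])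
    then have "laplace_density (1/e) (z - a) \<le> exp (e * \<bar>a - a'\<bar>) * laplace_density (1/e) (z - a')"
      using e by (simp add: laplace_density_def divide_simps)
    then show "ennreal (laplace_density (1/e) (z - a)) \<le> ennreal (exp (e * \<bar>a - a'\<bar>)) * ennreal (laplace_density (1/e) (z - a'))"
    proof -
      have "ennreal (laplace_density (1/e) (z - a)) \<le> ennreal (exp (e * \<bar>a - a'\<bar>) * laplace_density (1/e) (z - a'))"
        by (rule ennreal_leI) fact
      also have "\<dots> = ennreal (exp (e * \<bar>a - a'\<bar>)) * ennreal (laplace_density (1/e) (z - a'))"
        using e by (intro ennreal_mult) (auto simp: laplace_density_def)
      finally show ?thesis .
    qed
  qed
  then have "\<exists>f g. f \<in> borel_measurable lborel \<and> g \<in> borel_measurable lborel \<and>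
     Plap (1/e) a = density lborel f \<and> Plap (1/e) a' = density lborel g \<and>
     (\<forall>x\<in>space lborel. f x \<le> ennreal (exp (e * \<bar>a - a'\<bar>)) * g x)"
    unfolding Plap_def by (intro exI conjI) (auto)
  then show ?thesis
    unfolding dens_dom_def
    using Plap_finite[of "1/e" a] Plap_finite[of "1/e" a'] e
    by (auto intro!: lborel.sigma_finite_measure_axioms)
qed


lemma lap_sets[measurable_cong]: "sets (laplace b) = sets borel"
  by (simp add: laplace_def)

lemma pair_map_meas:
  fixes f :: "'a \<Rightarrow> 'c::second_countable_topology" and g :: "'b \<Rightarrow> 'd::second_countable_topology"
  assumes [measurable]: "f \<in> measurable M borel" "g \<in> measurable N borel"
  shows "(\<lambda>(x,y). (f x, g y)) \<in> measurable (M \<Otimes>\<^sub>M N) borel"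
proof -
  have "(\<lambda>(x,y). (f x, g y)) \<in> measurable (M \<Otimes>\<^sub>M N) (borel \<Otimes>\<^sub>M borel)" by measurable
  then show ?thesis by (simp add: borel_prod)
qed

lemma step_pair:
  fixes g :: "'b \<Rightarrow> 'c::second_countable_topology"
  assumes "N' = distr N borel g" "finite_measure N'" "g \<in> measurable N borel" "b > 0"
  shows "Plap b a \<Otimes>\<^sub>M N' = distr (laplace b \<Otimes>\<^sub>M N) borel (\<lambda>(x,y). (a + x, g y))"
proof -
  have "Plap b a \<Otimes>\<^sub>M N' = distr (laplace b \<Otimes>\<^sub>M N) (borel \<Otimes>\<^sub>M borel) (\<lambda>(x,y). (a + x, g y))"
    unfolding Plap_distr assms(1)
    by (rule pair_measure_distr) (use assms in \<open>auto simp: laplace_def intro: finite_measure.sigma_finite_measure\<close>)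
  then show ?thesis by (simp add: borel_prod)
qed

lemma mech_eq:
  assumes "e1 > 0" "e2 > 0"
  shows "mech e1 e2 D = Plap (1/e1) (S_x2 D) \<Otimes>\<^sub>M Plap (1/e1) (S_x_x2 D) \<Otimes>\<^sub>M Plap (1/e1) (S_1_x D)
     \<Otimes>\<^sub>M Plap (1/e2) (S_xy D) \<Otimes>\<^sub>M Plap (1/e2) (S_1_x_y D) \<Otimes>\<^sub>M Plap (1/e2) (S_1_y D)"
proof -
  have b: "1/e1 > 0" "1/e2 > 0" using assms by auto
  have fin: "finite_measure (Plap (1/e1) a)" "finite_measure (Plap (1/e2) a)" for a
    using Plap_finite b by auto
  have h6: "Plap (1/e2) (S_1_y D) = distr (laplace (1/e2)) borel (\<lambda>z. S_1_y D + z)"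
    by (rule Plap_distr)
  have h5: "Plap (1/e2) (S_1_x_y D) \<Otimes>\<^sub>M Plap (1/e2) (S_1_y D)
     = distr (laplace (1/e2) \<Otimes>\<^sub>M laplace (1/e2)) borel (\<lambda>(x,y). (S_1_x_y D + x, S_1_y D + y))"
    by (rule step_pair[OF h6 fin(2) _ b(2)]) (auto simp: laplace_def)
  have h4: "Plap (1/e2) (S_xy D) \<Otimes>\<^sub>M Plap (1/e2) (S_1_x_y D) \<Otimes>\<^sub>M Plap (1/e2) (S_1_y D)
     = distr (laplace (1/e2) \<Otimes>\<^sub>M laplace (1/e2) \<Otimes>\<^sub>M laplace (1/e2)) borel (\<lambda>(x,y). (S_xy D + x, (\<lambda>(x,y). (S_1_x_y D + x, S_1_y D + y)) y))"
    by (rule step_pair[OF h5 _ _ b(2)])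
       (auto intro!: finite_measure_pair_measure fin pair_map_meas)
  have h3: "Plap (1/e1) (S_1_x D) \<Otimes>\<^sub>M Plap (1/e2) (S_xy D) \<Otimes>\<^sub>M Plap (1/e2) (S_1_x_y D) \<Otimes>\<^sub>M Plap (1/e2) (S_1_y D)
     = distr (laplace (1/e1) \<Otimes>\<^sub>M laplace (1/e2) \<Otimes>\<^sub>M laplace (1/e2) \<Otimes>\<^sub>M laplace (1/e2)) borel (\<lambda>(x,y). (S_1_x D + x, (\<lambda>(x,y). (S_xy D + x, (\<lambda>(x,y). (S_1_x_y D + x, S_1_y D + y)) y)) y))"
    by (rule step_pair[OF h4 _ _ b(1)])
       (auto intro!: finite_measure_pair_measure fin pair_map_meas)
  have h2: "Plap (1/e1) (S_x_x2 D) \<Otimes>\<^sub>M Plap (1/e1) (S_1_x D) \<Otimes>\<^sub>M Plap (1/e2) (S_xy D) \<Otimes>\<^sub>M Plap (1/e2) (S_1_x_y D) \<Otimes>\<^sub>M Plap (1/e2) (S_1_y D)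
     = distr (laplace (1/e1) \<Otimes>\<^sub>M laplace (1/e1) \<Otimes>\<^sub>M laplace (1/e2) \<Otimes>\<^sub>M laplace (1/e2) \<Otimes>\<^sub>M laplace (1/e2)) borel (\<lambda>(x,y). (S_x_x2 D + x, (\<lambda>(x,y). (S_1_x D + x, (\<lambda>(x,y). (S_xy D + x, (\<lambda>(x,y). (S_1_x_y D + x, S_1_y D + y)) y)) y)) y))"
    by (rule step_pair[OF h3 _ _ b(1)])
       (auto intro!: finite_measure_pair_measure fin pair_map_meas)
  have h1: "Plap (1/e1) (S_x2 D) \<Otimes>\<^sub>M Plap (1/e1) (S_x_x2 D) \<Otimes>\<^sub>M Plap (1/e1) (S_1_x D) \<Otimes>\<^sub>M Plap (1/e2) (S_xy D) \<Otimes>\<^sub>M Plap (1/e2) (S_1_x_y D) \<Otimes>\<^sub>M Plap (1/e2) (S_1_y D)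
     = distr (laplace (1/e1) \<Otimes>\<^sub>M laplace (1/e1) \<Otimes>\<^sub>M laplace (1/e1) \<Otimes>\<^sub>M laplace (1/e2) \<Otimes>\<^sub>M laplace (1/e2) \<Otimes>\<^sub>M laplace (1/e2)) borel (\<lambda>(x,y). (S_x2 D + x, (\<lambda>(x,y). (S_x_x2 D + x, (\<lambda>(x,y). (S_1_x D + x, (\<lambda>(x,y). (S_xy D + x, (\<lambda>(x,y). (S_1_x_y D + x, S_1_y D + y)) y)) y)) y)) y))"
    by (rule step_pair[OF h2 _ _ b(1)])
       (auto intro!: finite_measure_pair_measure fin pair_map_meas)
  show ?thesis unfolding h1 mech_def noise_def
    by (intro arg_cong[where f="distr _ borel"]) (auto simp: fun_eq_iff)
qed


lemma dom_mech:
  assumes e: "e1 > 0" "e2 > 0"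
    and d1: "\<bar>S_x2 D - S_x2 D'\<bar> + \<bar>S_x_x2 D - S_x_x2 D'\<bar> + \<bar>S_1_x D - S_1_x D'\<bar> \<le> 1"
    and d2: "\<bar>S_xy D - S_xy D'\<bar> + \<bar>S_1_x_y D - S_1_x_y D'\<bar> + \<bar>S_1_y D - S_1_y D'\<bar> \<le> 1"
  shows "\<forall>A\<in>sets (mech e1 e2 D). emeasure (mech e1 e2 D) A \<le> ennreal (exp (e1 + e2)) * emeasure (mech e1 e2 D') A"
proof -
  let ?c = "ennreal (exp (e1 * \<bar>S_x2 D - S_x2 D'\<bar>)) * (ennreal (exp (e1 * \<bar>S_x_x2 D - S_x_x2 D'\<bar>)) *
     (ennreal (exp (e1 * \<bar>S_1_x D - S_1_x D'\<bar>)) * (ennreal (exp (e2 * \<bar>S_xy D - S_xy D'\<bar>)) *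
     (ennreal (exp (e2 * \<bar>S_1_x_y D - S_1_x_y D'\<bar>)) * ennreal (exp (e2 * \<bar>S_1_y D - S_1_y D'\<bar>))))))"
  have dd: "dens_dom (lborel \<Otimes>\<^sub>M lborel \<Otimes>\<^sub>M lborel \<Otimes>\<^sub>M lborel \<Otimes>\<^sub>M lborel \<Otimes>\<^sub>M lborel) ?c
     (mech e1 e2 D) (mech e1 e2 D')"
    unfolding mech_eq[OF e]
    by (intro dens_dom_pair dens_dom_base e)
  have "?c = ennreal (exp (e1 * (\<bar>S_x2 D - S_x2 D'\<bar> + \<bar>S_x_x2 D - S_x_x2 D'\<bar> + \<bar>S_1_x D - S_1_x D'\<bar>)
      + e2 * (\<bar>S_xy D - S_xy D'\<bar> + \<bar>S_1_x_y D - S_1_x_y D'\<bar> + \<bar>S_1_y D - S_1_y D'\<bar>)))"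
    by (simp add: ennreal_mult[symmetric] exp_add[symmetric] algebra_simps del: ennreal_mult')
  also have "\<dots> \<le> ennreal (exp (e1 + e2))"
  proof (rule ennreal_leI, subst exp_le_cancel_iff)
    show "e1 * (\<bar>S_x2 D - S_x2 D'\<bar> + \<bar>S_x_x2 D - S_x_x2 D'\<bar> + \<bar>S_1_x D - S_1_x D'\<bar>)
      + e2 * (\<bar>S_xy D - S_xy D'\<bar> + \<bar>S_1_x_y D - S_1_x_y D'\<bar> + \<bar>S_1_y D - S_1_y D'\<bar>) \<le> e1 + e2"
      using mult_left_mono[OF d1, of e1] mult_left_mono[OF d2, of e2] e by linarith
  qed
  finally have "dens_dom (lborel \<Otimes>\<^sub>M lborel \<Otimes>\<^sub>M lborel \<Otimes>\<^sub>M lborel \<Otimes>\<^sub>M lborel \<Otimes>\<^sub>M lborel) (ennreal (exp (e1 + e2)))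
     (mech e1 e2 D) (mech e1 e2 D')"
    by (rule dens_dom_mono[OF dd])
  then show ?thesis using dens_dom_le by blast
qed

lemma mech_finite: "e1 > 0 \<Longrightarrow> e2 > 0 \<Longrightarrow> finite_measure (mech e1 e2 D)"
  unfolding mech_eq
  by (intro finite_measure_pair_measure Plap_finite) auto

lemma diffs:
  assumes "valid_record r"
  shows "\<bar>S_x2 (xs @ r # ys) - S_x2 (xs @ ys)\<bar> + \<bar>S_x_x2 (xs @ r # ys) - S_x_x2 (xs @ ys)\<bar>
           + \<bar>S_1_x (xs @ r # ys) - S_1_x (xs @ ys)\<bar> \<le> 1"
    and "\<bar>S_xy (xs @ r # ys) - S_xy (xs @ ys)\<bar> + \<bar>S_1_x_y (xs @ r # ys) - S_1_x_y (xs @ ys)\<bar>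
           + \<bar>S_1_y (xs @ r # ys) - S_1_y (xs @ ys)\<bar> \<le> 1"
proof -
  obtain x y where r: "r = (x, y)" by (cases r)
  have x: "0 \<le> x" "x \<le> 1" and y: "0 \<le> y" "y \<le> 1"
    using assms r by (auto simp: valid_record_def)
  have "x * x \<le> x" using x by (simp add: mult_left_le)
  then show "\<bar>S_x2 (xs @ r # ys) - S_x2 (xs @ ys)\<bar> + \<bar>S_x_x2 (xs @ r # ys) - S_x_x2 (xs @ ys)\<bar>
           + \<bar>S_1_x (xs @ r # ys) - S_1_x (xs @ ys)\<bar> \<le> 1"
    using x by (simp add: S_x2_def S_x_x2_def S_1_x_def r power2_eq_square abs_if)
  have "x * y \<le> y" using x y by (simp add: mult_left_le_one_le)
  then show "\<bar>S_xy (xs @ r # ys) - S_xy (xs @ ys)\<bar> + \<bar>S_1_x_y (xs @ r # ys) - S_1_x_y (xs @ ys)\<bar>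
           + \<bar>S_1_y (xs @ r # ys) - S_1_y (xs @ ys)\<bar> \<le> 1"
    using x y by (simp add: S_xy_def S_1_x_y_def S_1_y_def r abs_if algebra_simps)
qed

theorem mainTheorem5:
  fixes \<epsilon>1 \<epsilon>2 \<epsilon> :: real
  assumes "\<epsilon>1 > 0" and "\<epsilon>2 > 0" and "\<epsilon> = \<epsilon>1 + \<epsilon>2"
  shows "pure_dp \<epsilon> (mech \<epsilon>1 \<epsilon>2)"
  unfolding pure_dp_def
proof (intro allI impI ballI)
  fix D D' S
  assume H: "valid_dataset D \<and> valid_dataset D' \<and> neighbors D D'"
    and S: "S \<in> sets (borel :: output6 measure)"
  have d: "\<bar>S_x2 D - S_x2 D'\<bar> + \<bar>S_x_x2 D - S_x_x2 D'\<bar> + \<bar>S_1_x D - S_1_x D'\<bar> \<le> 1 \<and>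
     \<bar>S_xy D - S_xy D'\<bar> + \<bar>S_1_x_y D - S_1_x_y D'\<bar> + \<bar>S_1_y D - S_1_y D'\<bar> \<le> 1"
    using H unfolding neighbors_def valid_dataset_def
  proof (elim conjE disjE exE)
    fix xs ys r assume "D' = xs @ r # ys" "D = xs @ ys" "\<forall>r\<in>set D'. valid_record r"
    then show ?thesis using diffs[of r xs ys] by (simp add: abs_minus_commute)
  next
    fix xs ys r assume "D = xs @ r # ys" "D' = xs @ ys" "\<forall>r\<in>set D. valid_record r"
    then show ?thesis using diffs[of r xs ys] by simp
  qed
  have SS: "S \<in> sets (mech \<epsilon>1 \<epsilon>2 D)" using S by (simp add: mech_def)
  have le: "emeasure (mech \<epsilon>1 \<epsilon>2 D) S \<le> ennreal (exp \<epsilon>) * emeasure (mech \<epsilon>1 \<epsilon>2 D') S"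
    using dom_mech[OF assms(1,2)] d SS assms(3) by blast
  interpret M1: finite_measure "mech \<epsilon>1 \<epsilon>2 D" using mech_finite assms by blast
  interpret M2: finite_measure "mech \<epsilon>1 \<epsilon>2 D'" using mech_finite assms by blast
  have "ennreal (measure (mech \<epsilon>1 \<epsilon>2 D) S) \<le> ennreal (exp \<epsilon> * measure (mech \<epsilon>1 \<epsilon>2 D') S)"
    using le by (simp add: M1.emeasure_eq_measure M2.emeasure_eq_measure ennreal_mult)
  then show "measure (mech \<epsilon>1 \<epsilon>2 D) S \<le> exp \<epsilon> * measure (mech \<epsilon>1 \<epsilon>2 D') S"
    by (subst (asm) ennreal_le_iff) auto
qed

end
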